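(* Let $(\mathcal U,\mathcal D)$ be a metric space, $\mathcal R\subseteq\mathcal U$ a finite dataset, $\delta>0$, and $a_1,\dots,a_n\in\mathcal U$. For $o\in\mathcal U$ let $o^n=(\mathcal D(a_1,o),\dots,\mathcal D(a_n,o))\in\mathbb{R}^n$. Let $\mathcal B_1,\dots,\mathcal B_p\subseteq\mathbb{R}^n$ be boxes $\mathcal B_i=\prod_{d=1}^n[\mathcal B_i^{\bot}[d],\mathcal B_i^{\top}[d]]$, and define the kernel partitions $\mathcal V_i=\{o\in\mathcal R: o^n\in\mathcal B_i\}$ and the whole partitions $$\mathcal W_i=\Big\{o\in\mathcal R:\ o^n\in\prod_{d=1}^n\big[\mathcal B_i^{\bot}[d]-\delta,\ \mathcal B_i^{\top}[d]+\delta\big]\Big\}.$$ Assume the kernel partitions are pairwise disjoint and $\bigcup_{i=1}^p\mathcal V_i=\mathcal R$. Then for any two objects $o_x,o_y\in\mathcal R$ with $\mathcal D(o_x,o_y)<\delta$, there exists $k\in\{1,\dots,p\}$ such that $o_x\in\mathcal V_k$ and $o_y\in\mathcal W_k$.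
   Context: The points $a_1,\dots,a_n$ are "dimensional pivots" used to map objects into the Euclidean target space $\mathbb{R}^n$; the boxes $\mathcal B_i$ are the areas obtained by partitioning that target space. A metric $\mathcal D$ satisfies non-negativity, $\mathcal D(x,y)=0$ iff $x=y$, symmetry and the triangle inequality. *)

theory Defs
  imports "HOL-Analysis.Analysis"
begin

definition is_metric :: "'u set \<Rightarrow> ('u \<Rightarrow> 'u \<Rightarrow> real) \<Rightarrow> bool" where
  "is_metric U D \<longleftrightarrow>
     (\<forall>x\<in>U. \<forall>y\<in>U. D x y \<ge> 0) \<and>
     (\<forall>x\<in>U. \<forall>y\<in>U. D x y = 0 \<longleftrightarrow> x = y) \<and>
     (\<forall>x\<in>U. \<forall>y\<in>U. D x y = D y x) \<and>
     (\<forall>x\<in>U. \<forall>y\<in>U. \<forall>z\<in>U. D x z \<le> D x y + D y z)"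

definition kernel_part ::
  "('u \<Rightarrow> 'u \<Rightarrow> real) \<Rightarrow> (nat \<Rightarrow> 'u) \<Rightarrow> nat \<Rightarrow> 'u set \<Rightarrow>
   (nat \<Rightarrow> nat \<Rightarrow> real) \<Rightarrow> (nat \<Rightarrow> nat \<Rightarrow> real) \<Rightarrow> nat \<Rightarrow> 'u set" where
  "kernel_part D a n R lo hi i =
     {x \<in> R. \<forall>d\<in>{1..n}. lo i d \<le> D (a d) x \<and> D (a d) x \<le> hi i d}"

definition whole_part ::
  "('u \<Rightarrow> 'u \<Rightarrow> real) \<Rightarrow> (nat \<Rightarrow> 'u) \<Rightarrow> nat \<Rightarrow> 'u set \<Rightarrow>
   (nat \<Rightarrow> nat \<Rightarrow> real) \<Rightarrow> (nat \<Rightarrow> nat \<Rightarrow> real) \<Rightarrow> real \<Rightarrow> nat \<Rightarrow> 'u set" where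
  "whole_part D a n R lo hi \<delta> i =
     {x \<in> R. \<forall>d\<in>{1..n}. lo i d - \<delta> \<le> D (a d) x \<and> D (a d) x \<le> hi i d + \<delta>}"

end

theory Submission
  imports Defs
begin

theorem lemma4:
  fixes U :: "'u set" and D :: "'u \<Rightarrow> 'u \<Rightarrow> real" and R :: "'u set"
    and \<delta> :: real and n p :: nat and a :: "nat \<Rightarrow> 'u"
    and lo hi :: "nat \<Rightarrow> nat \<Rightarrow> real" and ox oy :: 'u
  assumes "is_metric U D"
    and "R \<subseteq> U" and "finite R"
    and "\<delta> > 0"
    and "\<forall>d\<in>{1..n}. a d \<in> U"
    and "\<forall>i\<in>{1..p}. \<forall>j\<in>{1..p}. i \<noteq> j \<longrightarrow>
           kernel_part D a n R lo hi i \<inter> kernel_part D a n R lo hi j = {}"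
    and "(\<Union>i\<in>{1..p}. kernel_part D a n R lo hi i) = R"
    and "ox \<in> R" and "oy \<in> R" and "D ox oy < \<delta>"
  shows "\<exists>k\<in>{1..p}. ox \<in> kernel_part D a n R lo hi k \<and> oy \<in> whole_part D a n R lo hi \<delta> k"
proof -
  obtain k where k: "k \<in> {1..p}" "ox \<in> kernel_part D a n R lo hi k"
    using assms(7,8) by blast
  have M: "\<forall>x\<in>U. \<forall>y\<in>U. D x y = D y x" "\<forall>x\<in>U. \<forall>y\<in>U. \<forall>z\<in>U. D x z \<le> D x y + D y z"
    using assms(1) unfolding is_metric_def by auto
  have ou: "ox \<in> U" "oy \<in> U" using assms(2,8,9) by auto
  have "\<forall>d\<in>{1..n}. lo k d - \<delta> \<le> D (a d) oy \<and> D (a d) oy \<le> hi k d + \<delta>"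
  proof
    fix d assume d: "d \<in> {1..n}"
    have ad: "a d \<in> U" using assms(5) d by auto
    have b: "lo k d \<le> D (a d) ox \<and> D (a d) ox \<le> hi k d" using k(2) d unfolding kernel_part_def by auto
    have t1: "D (a d) oy \<le> D (a d) ox + D ox oy" using M(2) ad ou by blast
    have t2: "D (a d) ox \<le> D (a d) oy + D oy ox" using M(2) ad ou by blast
    have s: "D oy ox = D ox oy" using M(1) ou by blast
    show "lo k d - \<delta> \<le> D (a d) oy \<and> D (a d) oy \<le> hi k d + \<delta>"
      using b t1 t2 s assms(10) by linarith
  qed
  then have "oy \<in> whole_part D a n R lo hi \<delta> k" using assms(9) unfolding whole_part_def by auto
  then show ?thesis using k by blast
qed

end
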